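(* Fix calibration values $E^1,\dots,E^n\in\mathbb{R}^d_+$ with $\hat\sigma_j>0$ for all $j$. For every $t\in\mathbb{R}^d_+$, \[ \hat\Phi^{\mathrm{gwc}}(t):=\max_{1\le j\le d}\ \sup_{z_j\ge 0}\frac{t_j-\hat\mu_j(z_j)}{\hat\sigma_j(z_j)} =\max_{1\le j\le d}\max\Big\{\frac{t_j-\hat\mu_j(0)}{\hat\sigma_j(0)},\ \frac{t_j-\hat\mu_j(z^*_j)}{\hat\sigma_j(z^*_j)},\ -\frac{1}{\sqrt{n+1}}\Big\}, \] where $z^*_j=\hat\mu_j-\frac{\hat\sigma_j^2}{t_j-\hat\mu_j}$ if $t_j\ne\hat\mu_j$ and $\hat\mu_j\ge \frac{\hat\sigma_j^2}{t_j-\hat\mu_j}$, and $z^*_j=0$ otherwise (including when $t_j=\hat\mu_j$).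
   Context: $n\ge2$, $d\ge1$ integers. Calibration statistics: $\hat\mu_j=\frac1n\sum_{i=1}^n E^i_j$ and $\hat\sigma_j=\sqrt{\frac1n\sum_{i=1}^n(E^i_j-\hat\mu_j)^2}$. For $z\ge0$ (a placeholder for the unknown test residual coordinate), $\hat\mu_j(z)=\frac{\sum_{i=1}^nE^i_j+z}{n+1}$ and $\hat\sigma_j(z)=\sqrt{\frac{\sum_{i=1}^n(E^i_j-\hat\mu_j(z))^2+(z-\hat\mu_j(z))^2}{n}}$. *)

theory Defs
  imports Complex_Main
begin

(* Calibration residuals: E i j is the j-th coordinate of E^i, for i in {1..n}, j in {1..d}. *)

definition mu_hat :: "nat \<Rightarrow> (nat \<Rightarrow> nat \<Rightarrow> real) \<Rightarrow> nat \<Rightarrow> real" where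
  "mu_hat n E j = (\<Sum>i=1..n. E i j) / real n"

definition sigma_hat :: "nat \<Rightarrow> (nat \<Rightarrow> nat \<Rightarrow> real) \<Rightarrow> nat \<Rightarrow> real" where
  "sigma_hat n E j = sqrt ((\<Sum>i=1..n. (E i j - mu_hat n E j)^2) / real n)"

definition mu_z :: "nat \<Rightarrow> (nat \<Rightarrow> nat \<Rightarrow> real) \<Rightarrow> nat \<Rightarrow> real \<Rightarrow> real" where
  "mu_z n E j z = ((\<Sum>i=1..n. E i j) + z) / real (n + 1)"

definition sigma_z :: "nat \<Rightarrow> (nat \<Rightarrow> nat \<Rightarrow> real) \<Rightarrow> nat \<Rightarrow> real \<Rightarrow> real" where
  "sigma_z n E j z = sqrt (((\<Sum>i=1..n. (E i j - mu_z n E j z)^2) + (z - mu_z n E j z)^2) / real n)"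

definition score :: "nat \<Rightarrow> (nat \<Rightarrow> nat \<Rightarrow> real) \<Rightarrow> nat \<Rightarrow> real \<Rightarrow> real \<Rightarrow> real" where
  "score n E j tj z = (tj - mu_z n E j z) / sigma_z n E j z"

definition z_star :: "nat \<Rightarrow> (nat \<Rightarrow> nat \<Rightarrow> real) \<Rightarrow> nat \<Rightarrow> real \<Rightarrow> real" where
  "z_star n E j tj =
     (if tj \<noteq> mu_hat n E j \<and> mu_hat n E j \<ge> (sigma_hat n E j)^2 / (tj - mu_hat n E j)
      then mu_hat n E j - (sigma_hat n E j)^2 / (tj - mu_hat n E j) else 0)"

definition Phi_gwc :: "nat \<Rightarrow> nat \<Rightarrow> (nat \<Rightarrow> nat \<Rightarrow> real) \<Rightarrow> (nat \<Rightarrow> real) \<Rightarrow> real" where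
  "Phi_gwc n d E t = Max ((\<lambda>j. SUP z\<in>{0::real..}. score n E j (t j) z) ` {1..d})"

end

theory Submission
  imports Defs
begin

definition FF :: "real \<Rightarrow> real \<Rightarrow> real \<Rightarrow> real \<Rightarrow> real" where
  "FF a c s u = (a - c*u) / sqrt (s^2 + u^2)"

lemma FF_deriv:
  assumes "s > 0"
  shows "(FF a c s has_real_derivative ((-c*s^2 - a*u)/((s^2+u^2)*sqrt(s^2+u^2)))) (at u)"
proof -
  have p: "s^2 + u^2 > 0" using assms by (simp add: add_pos_nonneg)
  have "((\<lambda>u. (a - c*u) / sqrt (s^2 + u^2)) has_real_derivative
     ((- c) * sqrt (s^2+u^2) - (a - c*u) * (inverse (sqrt (s^2+u^2)) / 2 * (2*u))) / (sqrt (s^2+u^2))^2) (at u)"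
    using p by (auto intro!: derivative_eq_intros)
  moreover have "((- c) * sqrt (s^2+u^2) - (a - c*u) * (inverse (sqrt (s^2+u^2)) / 2 * (2*u))) / (sqrt (s^2+u^2))^2
     = (-c*s^2 - a*u)/((s^2+u^2)*sqrt(s^2+u^2))"
  proof -
    have q: "sqrt (s^2+u^2) > 0" using p by simp
    have r: "(sqrt (s^2+u^2))^2 = s^2+u^2" using p by simp
    have g: "\<And>r P. r > 0 \<Longrightarrow> r^2 = s^2+u^2 \<Longrightarrow> ((- c) * r - (a - c*u) * (inverse r / 2 * (2*u))) / r^2
      = (-c*s^2 - a*u)/((s^2+u^2)*r)"
    proof -
      fix r :: real assume r0: "r > 0" and r2: "r^2 = s^2+u^2"
      have "(- c) * r - (a - c*u) * (inverse r / 2 * (2*u)) = (-c*r^2 - a*u + c*u^2)/r"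
        using r0 by (simp add: field_simps power2_eq_square)
      also have "\<dots> = (-c*s^2 - a*u)/r" using r2 by (simp add: algebra_simps)
      finally show "((- c) * r - (a - c*u) * (inverse r / 2 * (2*u))) / r^2
      = (-c*s^2 - a*u)/((s^2+u^2)*r)" using r0 r2 by (simp add: field_simps)
    qed
    show ?thesis using g[OF q r] .
  qed
  ultimately show ?thesis unfolding FF_def[abs_def] by simp
qed

lemma FF_dec:
  assumes "s > 0" "x \<le> y" "\<And>u. x \<le> u \<Longrightarrow> u \<le> y \<Longrightarrow> -c*s^2 - a*u \<le> 0"
  shows "FF a c s y \<le> FF a c s x"
proof (rule DERIV_nonpos_imp_nonincreasing[OF assms(2)])
  fix u assume "x \<le> u" "u \<le> y"
  have p: "s^2 + u^2 > 0" using assms by (simp add: add_pos_nonneg)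
  show "\<exists>y. DERIV (FF a c s) u :> y \<and> y \<le> 0"
    using FF_deriv[OF assms(1)] assms(3)[OF \<open>x \<le> u\<close> \<open>u \<le> y\<close>] p
    by (intro exI[of _ "(-c*s^2 - a*u)/((s^2+u^2)*sqrt(s^2+u^2))"]) (auto intro!: divide_nonpos_pos)
qed

lemma FF_inc:
  assumes "s > 0" "x \<le> y" "\<And>u. x \<le> u \<Longrightarrow> u \<le> y \<Longrightarrow> -c*s^2 - a*u \<ge> 0"
  shows "FF a c s x \<le> FF a c s y"
proof (rule DERIV_nonneg_imp_nondecreasing[OF assms(2)])
  fix u assume "x \<le> u" "u \<le> y"
  have p: "s^2 + u^2 > 0" using assms by (simp add: add_pos_nonneg)
  show "\<exists>y. DERIV (FF a c s) u :> y \<and> y \<ge> 0"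
    using FF_deriv[OF assms(1)] assms(3)[OF \<open>x \<le> u\<close> \<open>u \<le> y\<close>] p
    by (intro exI[of _ "(-c*s^2 - a*u)/((s^2+u^2)*sqrt(s^2+u^2))"]) (auto intro!: divide_nonneg_pos)
qed

lemma FF_neg_tail:
  assumes "s > 0" "c > 0" "a < 0" "u \<ge> -c*s^2/a"
  shows "FF a c s u \<le> -c"
proof -
  have "a*u \<le> a*(-c*s^2/a)" using assms(3,4) by (intro mult_left_mono_neg) auto
  hence k0: "a*u \<le> -(c*s^2)" using assms(3) by simp
  have u0: "u > 0"
  proof (rule ccontr)
    assume "\<not> u > 0"
    hence "a*u \<ge> 0" using assms(3) by (simp add: mult_nonpos_nonpos)
    moreover have "c*s^2 > 0" using assms by simp
    ultimately show False using k0 by linarith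
  qed
  define r where "r = sqrt (s^2+u^2)"
  have rp: "r > 0" using assms unfolding r_def by (simp add: add_pos_nonneg)
  have ru: "r > u" unfolding r_def using assms by (intro real_less_rsqrt) simp
  have r2: "r^2 = s^2+u^2" unfolding r_def by (simp add: add_nonneg_nonneg)
  have k: "c*s^2 \<le> -a*u" using k0 by simp
  have "c*(r-u)*(r+u) = c*(r^2 - u^2)" by (simp add: algebra_simps power2_eq_square)
  also have "\<dots> = c*s^2" using r2 by simp
  also have "\<dots> \<le> -a*u" by (rule k)
  also have "\<dots> \<le> (-a)*(r+u)" using assms(3) u0 rp by (simp add: mult_left_mono)
  finally have "(c*(r-u))*(r+u) \<le> (-a)*(r+u)" .
  hence "c*(r-u) \<le> -a" by (rule mult_right_le_imp_le) (use ru u0 in linarith)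
  moreover have "c*(r-u) = c*r - c*u" by (simp add: right_diff_distrib)
  ultimately have "a - c*u \<le> -c*r" by linarith
  hence "(a-c*u)/r \<le> (-c*r)/r" by (rule divide_right_mono) (use rp in linarith)
  also have "(-c*r)/r = -c" using rp by simp
  finally show ?thesis unfolding FF_def r_def[symmetric] .
qed

lemma FF_gt:
  assumes "s > 0" "c > 0" "a \<ge> 0"
  shows "FF a c s u > -c"
proof -
  define r where "r = sqrt (s^2+u^2)"
  have rp: "r > 0" using assms unfolding r_def by (simp add: add_pos_nonneg)
  have ru: "r > u" unfolding r_def using assms
    by (intro real_less_rsqrt) simp
  have "c*u < c*r" using ru assms by simp
  hence "a - c*u > -c*r" using assms by linarith
  thus ?thesis unfolding FF_def r_def[symmetric] using rp by (simp add: less_divide_eq)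
qed

lemma FF_approach:
  assumes "s > 0" "c > 0" "e > 0"
  shows "\<exists>u\<ge>u0. FF a c s u > -c - e"
proof (cases "a \<ge> 0")
  case True thus ?thesis using FF_gt[OF assms(1,2) True, of u0] assms by (intro exI[of _ u0]) auto
next
  case False
  define u where "u = max u0 (max 1 (-a/e)) + 1"
  have u1: "u > 0" "u > -a/e" "u \<ge> u0" unfolding u_def by auto
  define r where "r = sqrt (s^2+u^2)"
  have rp: "r > 0" using assms unfolding r_def by (simp add: add_pos_nonneg)
  have ru: "r > u" unfolding r_def using assms by (intro real_less_rsqrt) simp
  have cr: "c*r > c*u" using ru assms by simp
  have "a*r \<le> a*u" using False ru by (intro mult_left_mono_neg) auto
  hence ar: "a*r/u \<le> a" using u1 by (simp add: divide_le_eq)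
  have "-a < u*e" using u1(2) assms(3) by (simp add: field_simps)
  hence "-(e*u) < a" by (simp add: mult.commute)
  hence au: "a/u > -e" using u1 by (simp add: less_divide_eq)
  have "a - c*u > a*r/u - c*r" using cr ar by linarith
  hence "(a - c*u)/r > (a*r/u - c*r)/r" using rp by (simp add: divide_strict_right_mono)
  also have "(a*r/u - c*r)/r = a/u - c" using rp u1 by (simp add: field_simps)
  finally have "FF a c s u > a/u - c" unfolding FF_def r_def[symmetric] .
  hence "FF a c s u > -c - e" using au by linarith
  thus ?thesis using u1 by blast
qed

lemma FF_bound:
  assumes s: "s > 0" and c: "c > 0" and u: "u0 \<le> u"
  shows "FF a c s u \<le> max (FF a c s u0)
           (max (FF a c s (if a \<noteq> 0 \<and> u0 \<le> -c*s^2/a then -c*s^2/a else u0)) (-c))"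
proof -
  define us where "us = -c*s^2/a"
  have aus: "a \<noteq> 0 \<Longrightarrow> a*us = -c*s^2" unfolding us_def by simp
  consider "a > 0" "u0 \<le> us" | "a > 0" "us < u0" | "a = 0" | "a < 0" by linarith
  thus ?thesis
  proof cases
    case 1
    have "FF a c s u \<le> FF a c s us"
    proof (cases "u \<le> us")
      case True
      show ?thesis
      proof (rule FF_inc[OF s True])
        fix v assume "u \<le> v" "v \<le> us"
        hence "a*v \<le> a*us" using 1 by (intro mult_left_mono) auto
        thus "-c*s^2 - a*v \<ge> 0" using aus 1 by simp
      qed
    next
      case False
      show ?thesis
      proof (rule FF_dec[OF s])
        show "us \<le> u" using False by simp
        fix v assume "us \<le> v" "v \<le> u"
        hence "a*us \<le> a*v" using 1 by (intro mult_left_mono) auto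
        thus "-c*s^2 - a*v \<le> 0" using aus 1 by simp
      qed
    qed
    thus ?thesis using 1 unfolding us_def by auto
  next
    case 2
    have "FF a c s u \<le> FF a c s u0"
    proof (rule FF_dec[OF s u])
      fix v assume "u0 \<le> v" "v \<le> u"
      hence "a*us \<le> a*v" using 2 by (intro mult_left_mono) auto
      thus "-c*s^2 - a*v \<le> 0" using aus 2 by simp
    qed
    thus ?thesis by auto
  next
    case 3
    have "FF a c s u \<le> FF a c s u0"
    proof (rule FF_dec[OF s u])
      fix v show "-c*s^2 - a*v \<le> 0" using 3 s c by simp
    qed
    thus ?thesis by auto
  next
    case 4
    show ?thesis
    proof (cases "u \<le> us")
      case True
      have "FF a c s u \<le> FF a c s u0"
      proof (rule FF_dec[OF s u])
        fix v assume "u0 \<le> v" "v \<le> u"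
        hence "a*us \<le> a*v" using 4 True by (intro mult_left_mono_neg) auto
        thus "-c*s^2 - a*v \<le> 0" using aus 4 by simp
      qed
      thus ?thesis by auto
    next
      case False
      have "FF a c s u \<le> -c" using FF_neg_tail[OF s c 4] False unfolding us_def by simp
      thus ?thesis by auto
    qed
  qed
qed

lemma sigma_z_eq:
  assumes n: "n \<ge> 1"
  shows "sigma_z n E j z = sqrt ((sigma_hat n E j)^2 + (z - mu_hat n E j)^2 / (real n + 1))"
proof -
  define S where "S = (\<Sum>i=1..n. E i j)"
  define mu where "mu = mu_hat n E j"
  define m where "m = mu_z n E j z"
  define N where "N = real n"
  have N: "N > 0" using n unfolding N_def by simp
  have muS: "mu = S / N" unfolding mu_def mu_hat_def S_def N_def by simp
  have mS: "m = (S + z)/(N+1)" unfolding m_def mu_z_def S_def N_def by simp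
  have "(\<Sum>i=1..n. (E i j - mu)) = S - N * mu"
    unfolding S_def N_def by (simp add: sum_subtractf)
  hence sum0: "(\<Sum>i=1..n. (E i j - mu)) = 0" using N muS by simp
  have pt: "\<And>i. (E i j - m)^2 = (E i j - mu)^2 + 2*(mu-m)*(E i j - mu) + (mu-m)^2"
    by (simp add: power2_eq_square algebra_simps)
  have e1: "(\<Sum>i=1..n. (E i j - m)^2) = (\<Sum>i=1..n. (E i j - mu)^2) + 2*(mu-m)*(\<Sum>i=1..n. (E i j - mu)) + N*(mu-m)^2"
    unfolding pt by (simp add: sum.distrib sum_distrib_left N_def)
  have d1: "mu - m = (mu - z)/(N+1)" unfolding muS mS using N by (simp add: field_simps)
  have d2a: "z - m = (N*z - S)/(N+1)" unfolding mS using N by (simp add: field_simps)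
  have d2b: "N*z - S = N*(z - mu)" unfolding muS using N by (simp add: right_diff_distrib)
  have d2: "z - m = N*(z-mu)/(N+1)" using d2a d2b by simp
  define x where "x = (z - mu)/(N+1)"
  have x1: "(mu - z)/(N+1) = -x" unfolding x_def by (simp add: minus_divide_left)
  have x2: "N*(z-mu)/(N+1) = N*x" unfolding x_def by simp
  have x3: "z - mu = (N+1)*x" unfolding x_def using N by simp
  have "N*((mu - z)/(N+1))^2 + (N*(z-mu)/(N+1))^2 = N*(N+1)*x^2"
    unfolding x1 x2 by (simp add: power2_eq_square algebra_simps)
  also have "\<dots> = N*(z-mu)^2/(N+1)" unfolding x3 using N by (simp add: power2_eq_square)
  finally have e2: "N*(mu-m)^2 + (z-m)^2 = N*(z-mu)^2/(N+1)" unfolding d1 d2 .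
  have ssq: "(sigma_hat n E j)^2 = (\<Sum>i=1..n. (E i j - mu)^2) / N"
    unfolding sigma_hat_def mu_def[symmetric] N_def[symmetric] using N
    by (simp add: sum_nonneg)
  have "sigma_z n E j z = sqrt (((\<Sum>i=1..n. (E i j - m)^2) + (z - m)^2) / N)"
    unfolding sigma_z_def m_def N_def by simp
  also have "((\<Sum>i=1..n. (E i j - m)^2) + (z - m)^2) / N = (sigma_hat n E j)^2 + (z - mu)^2 / (N + 1)"
  proof -
    have "(\<Sum>i=1..n. (E i j - m)^2) + (z - m)^2 = (\<Sum>i=1..n. (E i j - mu)^2) + N*(z-mu)^2/(N+1)"
      unfolding e1 sum0 using e2 by simp
    moreover have "((\<Sum>i=1..n. (E i j - mu)^2) + N*(z-mu)^2/(N+1)) / N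
        = (\<Sum>i=1..n. (E i j - mu)^2)/N + (z-mu)^2/(N+1)"
      using N by (simp add: add_divide_distrib)
    ultimately show ?thesis unfolding ssq by simp
  qed
  finally show ?thesis unfolding mu_def N_def .
qed

lemma score_FF:
  assumes n: "n \<ge> 1"
  shows "score n E j tj z = FF (tj - mu_hat n E j) (1/sqrt (real n + 1)) (sigma_hat n E j)
           ((z - mu_hat n E j) * (1/sqrt (real n + 1)))"
proof -
  define mu where "mu = mu_hat n E j"
  define c where "c = 1/sqrt (real n + 1)"
  have c2: "c^2 = 1/(real n + 1)" unfolding c_def by (simp add: power_divide)
  have Nm: "real n * mu = (\<Sum>i=1..n. E i j)" unfolding mu_def mu_hat_def using n by simp
  have "mu + (z - mu)/(real n + 1) = (real n * mu + z)/(real n + 1)"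
    by (simp add: field_simps)
  hence muz: "mu_z n E j z = mu + (z - mu)/(real n + 1)"
    unfolding mu_z_def Nm by simp
  have "c * ((z - mu) * c) = (z - mu) * c^2" by (simp add: power2_eq_square)
  hence cc: "c * ((z - mu) * c) = (z - mu)/(real n + 1)" unfolding c2 by simp
  have uu: "((z - mu) * c)^2 = (z - mu)^2/(real n + 1)"
    using c2 by (simp add: power_mult_distrib)
  show ?thesis
    unfolding score_def FF_def sigma_z_eq[OF n] mu_def[symmetric] c_def[symmetric] muz cc uu
    by simp
qed

lemma per_j:
  assumes n: "n \<ge> 1" and sp: "sigma_hat n E j > 0"
  shows "(SUP z\<in>{0::real..}. score n E j tj z) =
    max (score n E j tj 0) (max (score n E j tj (z_star n E j tj)) (- 1 / sqrt (real n + 1)))"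
proof -
  define mu where "mu = mu_hat n E j"
  define s where "s = sigma_hat n E j"
  define c where "c = 1/sqrt (real n + 1)"
  define a where "a = tj - mu"
  have s0: "s > 0" using sp unfolding s_def .
  have c0: "c > 0" unfolding c_def by simp
  have sc: "\<And>z. score n E j tj z = FF a c s ((z - mu) * c)"
    using score_FF[OF n] unfolding mu_def s_def c_def a_def by simp
  have ta: "(tj \<noteq> mu) = (a \<noteq> 0)" unfolding a_def by simp
  define u0 where "u0 = (0 - mu) * c"
  define w where "w = (if a \<noteq> 0 \<and> u0 \<le> -c*s^2/a then -c*s^2/a else u0)"
  have zs: "(z_star n E j tj - mu) * c = w"
  proof (cases "a \<noteq> 0 \<and> mu \<ge> s^2/a")
    case True
    have eq: "-c*s^2/a = (-(s^2/a))*c" by simp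
    have "(-mu)*c \<le> (-(s^2/a))*c" using True c0 by (intro mult_right_mono) auto
    hence "u0 \<le> -c*s^2/a" unfolding u0_def eq by simp
    thus ?thesis using True unfolding w_def z_star_def mu_def[symmetric] s_def[symmetric] a_def[symmetric]
      by (simp only: ta) (simp add: algebra_simps)
  next
    case False
    have "\<not> (a \<noteq> 0 \<and> u0 \<le> -c*s^2/a)"
    proof
      assume h: "a \<noteq> 0 \<and> u0 \<le> -c*s^2/a"
      have eq: "-c*s^2/a = (-(s^2/a))*c" by simp
      have "(-mu)*c \<le> (-(s^2/a))*c" using h unfolding u0_def eq by simp
      hence "-mu \<le> -(s^2/a)" by (rule mult_right_le_imp_le) (use c0 in auto)
      thus False using False h by simp
    qed
    thus ?thesis using False unfolding w_def z_star_def mu_def[symmetric] s_def[symmetric] a_def[symmetric] u0_def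
      by (simp only: ta) simp
  qed
  have zs0: "z_star n E j tj \<ge> 0"
    unfolding z_star_def by auto
  define M where "M = max (score n E j tj 0) (max (score n E j tj (z_star n E j tj)) (- 1 / sqrt (real n + 1)))"
  have M: "M = max (FF a c s u0) (max (FF a c s w) (-c))"
  proof -
    have cm: "- 1 / sqrt (real n + 1) = -c" unfolding c_def by simp
    show ?thesis unfolding M_def sc zs cm u0_def by simp
  qed
  have ub: "\<And>z. z \<ge> 0 \<Longrightarrow> score n E j tj z \<le> M"
  proof -
    fix z :: real assume "z \<ge> 0"
    hence "(0 - mu) * c \<le> (z - mu) * c" using c0 by (intro mult_right_mono) auto
    hence "u0 \<le> (z - mu) * c" unfolding u0_def .
    from FF_bound[OF s0 c0 this, of a] show "score n E j tj z \<le> M" unfolding M sc w_def by simp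
  qed
  have bdd: "bdd_above ((\<lambda>z. score n E j tj z) ` {0..})"
    using ub by (intro bdd_aboveI2[of _ _ M]) auto
  have le: "(SUP z\<in>{0::real..}. score n E j tj z) \<le> M"
    using ub by (intro cSUP_least) auto
  have g1: "score n E j tj 0 \<le> (SUP z\<in>{0::real..}. score n E j tj z)"
    by (rule cSUP_upper[OF _ bdd]) simp
  have g2: "score n E j tj (z_star n E j tj) \<le> (SUP z\<in>{0::real..}. score n E j tj z)"
    by (rule cSUP_upper[OF _ bdd]) (use zs0 in simp)
  have g3: "-c \<le> (SUP z\<in>{0::real..}. score n E j tj z)"
  proof (rule ccontr)
    assume "\<not> ?thesis"
    hence e: "(-c) - (SUP z\<in>{0::real..}. score n E j tj z) > 0" by simp
    from FF_approach[OF s0 c0 e, of u0 a] obtain u where u: "u \<ge> u0"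
      "FF a c s u > -c - ((-c) - (SUP z\<in>{0::real..}. score n E j tj z))" by blast
    define z where "z = mu + u/c"
    have zz: "(z - mu)*c = u" unfolding z_def using c0 by simp
    have "u0 / c \<le> u / c" using u(1) c0 by (simp add: divide_right_mono)
    hence "z \<ge> 0" unfolding z_def u0_def using c0 by simp
    hence "score n E j tj z \<le> (SUP z\<in>{0::real..}. score n E j tj z)"
      by (intro cSUP_upper[OF _ bdd]) simp
    moreover have "score n E j tj z > (SUP z\<in>{0::real..}. score n E j tj z)"
      using u(2) unfolding sc zz by simp
    ultimately show False by simp
  qed
  have ge: "M \<le> (SUP z\<in>{0::real..}. score n E j tj z)"
    using g1 g2 g3 unfolding M_def c_def by simp
  show ?thesis using antisym[OF le ge] unfolding M_def .
qed

theorem lemma3p3: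
  fixes n d :: nat and E :: "nat \<Rightarrow> nat \<Rightarrow> real" and t :: "nat \<Rightarrow> real"
  assumes "n \<ge> 2" and "d \<ge> 1"
    and "\<forall>i\<in>{1..n}. \<forall>j\<in>{1..d}. E i j \<ge> 0"
    and "\<forall>j\<in>{1..d}. sigma_hat n E j > 0"
    and "\<forall>j\<in>{1..d}. t j \<ge> 0"
  shows "Phi_gwc n d E t =
    Max ((\<lambda>j. max (score n E j (t j) 0)
                  (max (score n E j (t j) (z_star n E j (t j))) (- 1 / sqrt (real n + 1)))) ` {1..d})"
proof -
  have n: "n \<ge> 1" using assms(1) by simp
  show ?thesis unfolding Phi_gwc_def
    by (rule arg_cong[where f=Max], rule image_cong[OF refl], rule per_j[OF n]) (use assms(4) in auto)
qed

end
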